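(* Let $k$ be a field, $D$ a $k$-algebra, $\sigma$ an automorphism of $D$, $a$ central in $D$, and $A=D(\sigma,a)$. (i) If $\sigma^m$ is an inner automorphism for some $m\geq1$ (i.e. there is a unit $u\in D$ with $\sigma^m(d)=udu^{-1}$ for all $d\in D$), then $\operatorname{GKdim}(A)=\operatorname{GKdim}(D)+1$. (ii) If $\sigma$ has finite order, then $\operatorname{GKdim}(A)=\operatorname{GKdim}(D)+1$.
   Context: The generalized Weyl algebra $D(\sigma,a)$ is generated by $D$ and indeterminates $x,y$ with $xd=\sigma(d)x$, $yd=\sigma^{-1}(d)y$ ($d\in D$), $yx=a$, $xy=\sigma(a)$. $\operatorname{GKdim}(B)=\sup_V\limsup_{n\to\infty}\log_n\dim_k(\sum_{i=0}^nV^i)$ over finite-dimensional subspaces $V$ of $B$. *)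

theory Defs
  imports Complex_Main "HOL-Library.Extended_Real" "HOL-Library.Liminf_Limsup"
begin

text \<open>A k-algebra is modelled as a ring type 'a :: ring_1 together with a scalar
multiplication s :: 'k => 'a => 'a (in the intended uses s c b = iota c * b for a
central ring homomorphism iota from k).\<close>

definition subspace_prod :: "('k::field \<Rightarrow> 'a::ring_1 \<Rightarrow> 'a) \<Rightarrow> 'a set \<Rightarrow> 'a set \<Rightarrow> 'a set" where
  "subspace_prod s V W = module.span s {v * w | v w. v \<in> V \<and> w \<in> W}"

fun subspace_power :: "('k::field \<Rightarrow> 'a::ring_1 \<Rightarrow> 'a) \<Rightarrow> 'a set \<Rightarrow> nat \<Rightarrow> 'a set" where
  "subspace_power s V 0 = module.span s {1}"
| "subspace_power s V (Suc n) = subspace_prod s (subspace_power s V n) V"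

definition GKdim :: "('k::field \<Rightarrow> 'a::ring_1 \<Rightarrow> 'a) \<Rightarrow> ereal" where
  "GKdim s = (SUP V \<in> {V. module.subspace s V \<and> (\<exists>B. finite B \<and> V = module.span s B)}.
      limsup (\<lambda>n::nat. ereal (log (real n)
        (real (vector_space.dim s (module.span s (\<Union>i\<in>{0..n}. subspace_power s V i)))))))"

definition k_algebra_emb :: "('k::field \<Rightarrow> 'd::ring_1) \<Rightarrow> bool" where
  "k_algebra_emb \<iota> \<longleftrightarrow> \<iota> 1 = 1 \<and> (\<forall>c e. \<iota> (c + e) = \<iota> c + \<iota> e) \<and>
     (\<forall>c e. \<iota> (c * e) = \<iota> c * \<iota> e) \<and> (\<forall>c d. \<iota> c * d = d * \<iota> c)"

definition k_algebra_aut :: "('k::field \<Rightarrow> 'd::ring_1) \<Rightarrow> ('d \<Rightarrow> 'd) \<Rightarrow> bool" where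
  "k_algebra_aut \<iota> \<sigma> \<longleftrightarrow> bij \<sigma> \<and> \<sigma> 1 = 1 \<and> (\<forall>d e. \<sigma> (d + e) = \<sigma> d + \<sigma> e) \<and>
     (\<forall>d e. \<sigma> (d * e) = \<sigma> d * \<sigma> e) \<and> (\<forall>c. \<sigma> (\<iota> c) = \<iota> c)"

definition unital_ring_hom :: "('d::ring_1 \<Rightarrow> 'a::ring_1) \<Rightarrow> bool" where
  "unital_ring_hom \<phi> \<longleftrightarrow> \<phi> 1 = 1 \<and> (\<forall>d e. \<phi> (d + e) = \<phi> d + \<phi> e) \<and>
     (\<forall>d e. \<phi> (d * e) = \<phi> d * \<phi> e)"

text \<open>(A, phi, x, y) is the generalized Weyl algebra D(sigma, a): D embeds via phi, x and y
satisfy the defining relations, and A is the free left D-module on the monomials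
x^n (n >= 0) and y^m (m >= 1), i.e. every element has a unique normal form.\<close>
definition is_GWA :: "('d::ring_1 \<Rightarrow> 'd) \<Rightarrow> 'd \<Rightarrow> ('d \<Rightarrow> 'a::ring_1) \<Rightarrow> 'a \<Rightarrow> 'a \<Rightarrow> bool" where
  "is_GWA \<sigma> a \<phi> x y \<longleftrightarrow> unital_ring_hom \<phi> \<and>
     (\<forall>d. x * \<phi> d = \<phi> (\<sigma> d) * x) \<and> (\<forall>d. y * \<phi> d = \<phi> (inv \<sigma> d) * y) \<and>
     y * x = \<phi> a \<and> x * y = \<phi> (\<sigma> a) \<and>
     (\<forall>b. \<exists>!(c, e). finite {n. c n \<noteq> 0} \<and> finite {n. e n \<noteq> 0} \<and>
        b = (\<Sum>n\<in>{n. c n \<noteq> 0}. \<phi> (c n) * x ^ n) + (\<Sum>n\<in>{n. e n \<noteq> 0}. \<phi> (e n) * y ^ Suc n))"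

end

theory Submission
  imports Defs
begin

definition setmul :: "'a::times set \<Rightarrow> 'a set \<Rightarrow> 'a set" where
  "setmul S T = {s * t | s t. s \<in> S \<and> t \<in> T}"

fun setpow :: "'a::monoid_mult set \<Rightarrow> nat \<Rightarrow> 'a set" where
  "setpow S 0 = {1}"
| "setpow S (Suc n) = setmul (setpow S n) S"

lemma setmul_assoc: "setmul (setmul A B) (C::'a::semigroup_mult set) = setmul A (setmul B C)"
  unfolding setmul_def by (auto simp: mult.assoc) (metis mult.assoc)+

lemma setmul_one: "setmul A {1::'a::monoid_mult} = A" "setmul {1::'a::monoid_mult} A = A"
  unfolding setmul_def by auto

lemma setpow_add: "setpow A (m + n) = setmul (setpow A m) (setpow (A::'a::monoid_mult set) n)"
  by (induction n) (auto simp: setmul_one setmul_assoc[symmetric])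

lemma setmul_mono: "A \<subseteq> A' \<Longrightarrow> B \<subseteq> B' \<Longrightarrow> setmul A B \<subseteq> setmul A' B'"
  unfolding setmul_def by blast

lemma finite_setmul: "finite A \<Longrightarrow> finite B \<Longrightarrow> finite (setmul A B)"
proof -
  assume "finite A" "finite B"
  have "setmul A B = (\<lambda>(a,b). a * b) ` (A \<times> B)" unfolding setmul_def by auto
  then show ?thesis using \<open>finite A\<close> \<open>finite B\<close> by simp
qed

lemma finite_setpow: "finite A \<Longrightarrow> finite (setpow A n)"
  by (induction n) (auto intro: finite_setmul)

lemma setpow_mono_set: "A \<subseteq> B \<Longrightarrow> setpow A n \<subseteq> setpow B n"
  by (induction n) (simp_all add: setmul_mono)

lemma setpow_Suc_mono: "(1::'a::monoid_mult) \<in> A \<Longrightarrow> setpow A n \<subseteq> setpow A (Suc n)"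
  unfolding setpow.simps setmul_def by force

lemma setpow_mono: assumes "(1::'a::monoid_mult) \<in> A" shows "m \<le> n \<Longrightarrow> setpow A m \<subseteq> setpow A n"
proof (induction n)
  case 0 then show ?case by simp
next
  case (Suc n) then show ?case using setpow_Suc_mono[OF assms, of n] by (auto simp: le_Suc_eq)
qed

lemma one_setpow: "(1::'a::monoid_mult) \<in> A \<Longrightarrow> 1 \<in> setpow A n"
  using setpow_mono[of A 0 n] by auto

lemma setpow_insert1: "setpow (insert (1::'a::monoid_mult) B) n = (\<Union>i\<in>{0..n}. setpow B i)"
proof (induction n)
  case 0 then show ?case by simp
next
  case (Suc n)
  have "setpow (insert 1 B) (Suc n) = setmul (\<Union>i\<in>{0..n}. setpow B i) (insert 1 B)"
    using Suc by simp
  also have "\<dots> = (\<Union>i\<in>{0..n}. setpow B i) \<union> (\<Union>i\<in>{0..n}. setpow B (Suc i))"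
  proof (rule set_eqI)
    fix w
    show "w \<in> setmul (\<Union>i\<in>{0..n}. setpow B i) (insert 1 B) \<longleftrightarrow>
      w \<in> (\<Union>i\<in>{0..n}. setpow B i) \<union> (\<Union>i\<in>{0..n}. setpow B (Suc i))"
      unfolding setmul_def setpow.simps by force
  qed
  also have "\<dots> = (\<Union>i\<in>{0..Suc n}. setpow B i)"
  proof (rule set_eqI, rule iffI)
    fix w assume "w \<in> (\<Union>i\<in>{0..n}. setpow B i) \<union> (\<Union>i\<in>{0..n}. setpow B (Suc i))"
    then show "w \<in> (\<Union>i\<in>{0..Suc n}. setpow B i)"
      by (auto simp del: setpow.simps)
  next
    fix w assume "w \<in> (\<Union>i\<in>{0..Suc n}. setpow B i)"
    then obtain i where i: "i \<le> Suc n" "w \<in> setpow B i" by auto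
    show "w \<in> (\<Union>i\<in>{0..n}. setpow B i) \<union> (\<Union>i\<in>{0..n}. setpow B (Suc i))"
    proof (cases i)
      case 0 then show ?thesis using i by (auto simp del: setpow.simps)
    next
      case (Suc j) then show ?thesis using i by (auto simp del: setpow.simps)
    qed
  qed
  finally show ?case .
qed

locale kalg =
  fixes \<kappa> :: "'k::field \<Rightarrow> 'a::ring_1"
  assumes k1: "\<kappa> 1 = 1" and kadd: "\<And>c e. \<kappa> (c + e) = \<kappa> c + \<kappa> e"
    and kmul: "\<And>c e. \<kappa> (c * e) = \<kappa> c * \<kappa> e" and kcen: "\<And>c b. \<kappa> c * b = b * \<kappa> c"
begin

sublocale vector_space "\<lambda>c b. \<kappa> c * b"
  by unfold_locales (auto simp: distrib_left distrib_right kadd kmul k1 mult.assoc)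

lemma span_mul_left: assumes "x \<in> span S" "t \<in> T" shows "x * t \<in> span (setmul S T)"
  using assms(1)
proof (induction rule: span_induct)
  case (step x) then show ?case using assms(2) by (auto simp: setmul_def intro!: span_base)
next
  case base
  show ?case unfolding subspace_def
    by (auto simp: distrib_right mult.assoc intro: span_add span_scale span_zero)
qed

lemma span_mul_right: assumes "s \<in> S" "y \<in> span T" shows "s * y \<in> span (setmul S T)"
  using assms(2)
proof (induction rule: span_induct)
  case (step y) then show ?case using assms(1) by (auto simp: setmul_def intro!: span_base)
next
  case base
  have "s * (\<kappa> c * y) = \<kappa> c * (s * y)" for c y
    by (metis kcen mult.assoc)
  then show ?case unfolding subspace_def
    by (auto simp: distrib_left intro: span_add span_scale span_zero)
qed

lemma span_mul: assumes "x \<in> span S" "y \<in> span T" shows "x * y \<in> span (setmul S T)"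
  using assms(1)
proof (induction rule: span_induct)
  case (step x) then show ?case using assms(2) span_mul_right by blast
next
  case base
  show ?case unfolding subspace_def
    by (auto simp: distrib_right mult.assoc intro: span_add span_scale span_zero)
qed

lemma span_setmul_span: "span (setmul (span S) (span T)) = span (setmul S T)"
proof
  show "span (setmul (span S) (span T)) \<subseteq> span (setmul S T)"
    by (rule span_minimal) (use span_mul[of _ S _ T] in \<open>auto simp: setmul_def\<close>)
  show "span (setmul S T) \<subseteq> span (setmul (span S) (span T))"
    by (rule span_mono, rule setmul_mono) (auto intro: span_base)
qed

lemma subspace_power_span: "subspace_power (\<lambda>c b. \<kappa> c * b) (span B) n = span (setpow B n)"
proof (induction n)
  case 0 then show ?case by simp
next
  case (Suc n)
  have "subspace_power (\<lambda>c b. \<kappa> c * b) (span B) (Suc n) = span (setmul (span (setpow B n)) (span B))"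
    using Suc by (simp add: subspace_prod_def setmul_def)
  then show ?case by (simp add: span_setmul_span)
qed

lemma G_span: "span (\<Union>i\<in>{0..n}. subspace_power (\<lambda>c b. \<kappa> c * b) (span B) i) = span (setpow (insert 1 B) n)"
proof -
  have "span (\<Union>i\<in>{0..n}. span (setpow B i)) = span (\<Union>i\<in>{0..n}. setpow B i)"
  proof
    show "span (\<Union>i\<in>{0..n}. span (setpow B i)) \<subseteq> span (\<Union>i\<in>{0..n}. setpow B i)"
      by (rule span_minimal) (auto intro: span_mono[THEN subsetD])
    show "span (\<Union>i\<in>{0..n}. setpow B i) \<subseteq> span (\<Union>i\<in>{0..n}. span (setpow B i))"
      by (rule span_mono) (auto intro: span_base)
  qed
  then show ?thesis by (simp add: subspace_power_span setpow_insert1)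
qed

lemma setpow_span_mult: assumes "B \<subseteq> span (setpow Z M)" shows "setpow B i \<subseteq> span (setpow Z (M * i))"
proof (induction i)
  case 0 then show ?case by (auto intro: span_base)
next
  case (Suc i)
  show ?case
  proof
    fix w assume "w \<in> setpow B (Suc i)"
    then obtain p b where "w = p * b" "p \<in> setpow B i" "b \<in> B" by (auto simp: setmul_def)
    then have "w \<in> span (setmul (setpow Z (M*i)) (setpow Z M))"
      using Suc assms by (auto intro!: span_mul)
    then show "w \<in> span (setpow Z (M * Suc i))"
      by (simp add: setpow_add[symmetric] add.commute)
  qed
qed

end

lemma powr_eventually_large:
  fixes \<delta> M :: real assumes "\<delta> > 0" shows "\<exists>N. \<forall>n\<ge>N. M < real n powr \<delta>"
proof -
  define b where "b = (\<bar>M\<bar> + 1) powr (1/\<delta>)"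
  have b0: "b \<ge> 0" unfolding b_def by simp
  show ?thesis
  proof (intro exI allI impI)
    fix n :: nat assume "nat \<lceil>b\<rceil> + 1 \<le> n"
    then have "b < real n" by linarith
    then have "b powr \<delta> < real n powr \<delta>" using b0 assms by (intro powr_less_mono2) auto
    moreover have "b powr \<delta> = \<bar>M\<bar> + 1" unfolding b_def using assms by (simp add: powr_powr)
    ultimately show "M < real n powr \<delta>" by linarith
  qed
qed

lemma limsup_upper:
  fixes f g :: "nat \<Rightarrow> nat" and c K :: nat
  assumes K: "K \<ge> 1" and f1: "\<And>n. f n \<ge> 1" and g1: "\<And>n. g n \<ge> 1"
    and bound: "\<And>n. n \<ge> 1 \<Longrightarrow> g n \<le> c * n * f (K * n)"
  shows "limsup (\<lambda>n. ereal (log (real n) (real (g n))))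
       \<le> limsup (\<lambda>n. ereal (log (real n) (real (f n)))) + 1"
  (is "?Lg \<le> ?Lf + 1")
proof (subst Limsup_le_iff, intro allI impI)
  fix y assume y: "?Lf + 1 < y"
  show "\<forall>\<^sub>F n in sequentially. ereal (log (real n) (real (g n))) < y"
  proof (cases y)
    case PInf then show ?thesis by simp
  next
    case MInf then show ?thesis using y by simp
  next
    case (real t)
    have "?Lf < ereal (t - 1)" using y real by (cases ?Lf) auto
    then obtain z where z1: "?Lf < ereal z" and z2: "ereal z < ereal (t - 1)"
      using ereal_dense2 by blast
    have zt: "z < t - 1" using z2 by simp
    have "\<forall>\<^sub>F n in sequentially. ereal (log (real n) (real (f n))) < ereal z"
      using Limsup_lessD[OF z1] .
    then obtain N where N: "\<And>m. m \<ge> N \<Longrightarrow> log (real m) (real (f m)) < z"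
      unfolding eventually_sequentially by auto
    define M where "M = real c * real K powr z"
    obtain N2 where N2: "\<And>n. n \<ge> N2 \<Longrightarrow> M < real n powr (t - 1 - z)"
      using powr_eventually_large[of "t - 1 - z" M] zt by auto
    show ?thesis unfolding eventually_sequentially
    proof (intro exI allI impI)
      fix n assume n: "max (max N N2) 2 \<le> n"
      then have n2: "real n > 1" by simp
      have Knn: "K * n \<ge> n" using K by simp
      have Kn: "K * n \<ge> N" "real (K * n) > 1" using n Knn by linarith+
      have "log (real (K*n)) (real (f (K*n))) < z" using N[OF Kn(1)] .
      then have fK: "real (f (K*n)) < real (K*n) powr z"
        using Kn f1[of "K*n"] by (subst (asm) log_less_iff) auto
      have "real (g n) \<le> real c * real n * real (f (K*n))"
        using bound[of n] n by (simp flip: of_nat_mult)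
      also have "\<dots> \<le> real c * real n * (real (K*n) powr z)"
        using fK by (intro mult_left_mono) auto
      also have "\<dots> = M * real n powr (1 + z)"
        unfolding M_def using n2 K by (simp add: powr_mult powr_add)
      also have "\<dots> < real n powr (t - 1 - z) * real n powr (1 + z)"
        using N2[of n] n n2 by (intro mult_strict_right_mono) auto
      also have "\<dots> = real n powr t" by (simp add: powr_add[symmetric])
      finally have "real (g n) < real n powr t" .
      then have "log (real n) (real (g n)) < t" using n2 g1[of n] by (subst log_less_iff) auto
      then show "ereal (log (real n) (real (g n))) < y" using real by simp
    qed
  qed
qed

lemma limsup_lower:
  fixes f g :: "nat \<Rightarrow> nat"
  assumes f1: "\<And>n. f n \<ge> 1" and g1: "\<And>n. g n \<ge> 1"
    and bound: "\<And>n. (n + 1) * f n \<le> g (2 * n)"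
  shows "limsup (\<lambda>n. ereal (log (real n) (real (f n)))) + 1
       \<le> limsup (\<lambda>n. ereal (log (real n) (real (g n))))"
  (is "?Lf + 1 \<le> ?Lg")
proof (rule ccontr)
  assume "\<not> ?Lf + 1 \<le> ?Lg"
  then have "?Lg < ?Lf + 1" by simp
  then obtain t where t1: "?Lg < ereal t" and t2: "ereal t < ?Lf + 1"
    using ereal_dense2 by blast
  have "ereal (t - 1) < ?Lf" using t2 by (cases ?Lf) auto
  then obtain z where z1: "ereal (t - 1) < ereal z" and z2: "ereal z < ?Lf"
    using ereal_dense2 by blast
  have zt: "t - 1 < z" using z1 by simp
  obtain N where N: "\<And>m. m \<ge> N \<Longrightarrow> log (real m) (real (g m)) < t"
    using Limsup_lessD[OF t1] unfolding eventually_sequentially by auto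
  obtain N2 where N2: "\<And>n. n \<ge> N2 \<Longrightarrow> 2 powr t < real n powr (1 + z - t)"
    using powr_eventually_large[of "1 + z - t" "2 powr t"] zt by auto
  have "\<not> (\<forall>\<^sub>F n in sequentially. ereal (log (real n) (real (f n))) \<le> ereal z)"
  proof
    assume "\<forall>\<^sub>F n in sequentially. ereal (log (real n) (real (f n))) \<le> ereal z"
    then have "?Lf \<le> ereal z" by (rule Limsup_bounded)
    then show False using z2 by simp
  qed
  then obtain n where n: "n \<ge> max (max N N2) 2" and fn: "\<not> log (real n) (real (f n)) \<le> z"
    unfolding eventually_sequentially by (metis ereal_less_eq(3))
  have n2: "real n > 1" using n by simp
  have "real n powr z < real (f n)" using fn n2 f1[of n] by (subst (asm) log_le_iff) auto
  have "real (2*n) powr t = 2 powr t * real n powr t" by (simp add: powr_mult)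
  also have "\<dots> < real n powr (1 + z - t) * real n powr t"
    using N2[of n] n n2 by (intro mult_strict_right_mono) auto
  also have "\<dots> = real n * real n powr z" using n2 by (simp add: powr_add[symmetric] powr_add)
  also have "\<dots> \<le> real n * real (f n)"
    using \<open>real n powr z < real (f n)\<close> by (intro mult_left_mono) auto
  also have "\<dots> \<le> real (g (2*n))"
  proof -
    have "n * f n \<le> (n+1) * f n" by simp
    then have "n * f n \<le> g (2*n)" using bound[of n] by linarith
    then show ?thesis by (metis of_nat_le_iff of_nat_mult)
  qed
  finally have "real (2*n) powr t < real (g (2*n))" .
  then have "t < log (real (2*n)) (real (g (2*n)))" using n2 g1[of "2*n"]
    by (subst less_log_iff) auto
  moreover have "2*n \<ge> N" using n by simp
  ultimately show False using N[of "2*n"] by simp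
qed

context kalg begin

lemma card_le_dim: assumes "finite W" "independent Q" "Q \<subseteq> span W" shows "card Q \<le> dim (span W)"
proof -
  obtain \<beta> where b: "\<beta> \<subseteq> span W" "independent \<beta>" "span W \<subseteq> span \<beta>" "card \<beta> = dim (span W)"
    using basis_exists by blast
  have "finite \<beta>" using independent_span_bound[OF assms(1) b(2) b(1)] by simp
  then show ?thesis using independent_span_bound[OF \<open>finite \<beta>\<close> assms(2)] assms(3) b by auto
qed

lemma dim_pos: assumes "finite B" shows "dim (span (setpow (insert 1 B) n)) \<ge> 1"
proof -
  have "1 \<in> span (setpow (insert 1 B) n)" by (rule span_base, rule one_setpow) simp
  moreover have "independent {1}" by simp
  ultimately have "card {1} \<le> dim (span (setpow (insert 1 B) n))"
    using card_le_dim[OF finite_setpow[of "insert 1 B" n], of "{1}"] assms by auto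
  then show ?thesis by simp
qed

lemma GKdim_alt: "GKdim (\<lambda>c b. \<kappa> c * b) =
  (SUP B\<in>{B. finite B}. limsup (\<lambda>n::nat. ereal (log (real n) (real (dim (span (setpow (insert 1 B) n)))))))"
proof -
  have eq: "{V. subspace V \<and> (\<exists>B. finite B \<and> V = span B)} = span ` {B. finite B}" by auto
  show ?thesis unfolding GKdim_def eq image_image G_span ..
qed

lemma linear_span_into:
  fixes L :: "'a \<Rightarrow> 'b::ring_1" and \<kappa>' :: "'k \<Rightarrow> 'b"
  assumes Ladd: "\<And>d e. L (d + e) = L d + L e" and Lsc: "\<And>c d. L (\<kappa> c * d) = \<kappa>' c * L d"
    and kk: "kalg \<kappa>'"
    and d: "d \<in> span S"
  shows "L d \<in> module.span (\<lambda>c b. \<kappa>' c * b) (L ` S)"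
proof -
  interpret B: kalg \<kappa>' by (rule kk)
  have L0: "L 0 = 0" using Ladd[of 0 0] by simp
  from d show ?thesis
  proof (induction rule: span_induct)
    case (step x) then show ?case by (auto intro: B.span_base)
  next
    case base
    show ?case unfolding subspace_def
      by (auto simp: L0 Ladd Lsc intro: B.span_add B.span_scale B.span_zero)
  qed
qed

end

definition Upow :: "'a::monoid_mult \<Rightarrow> 'a \<Rightarrow> int \<Rightarrow> 'a" where
  "Upow u v q = (if 0 \<le> q then u ^ nat q else v ^ nat (- q))"

lemma uv_pow:
  fixes u v :: "'a::monoid_mult" assumes uv: "u * v = 1"
  shows "u ^ i * v ^ j = (if j \<le> i then u ^ (i - j) else v ^ (j - i))"
proof (induction j arbitrary: i)
  case 0 then show ?case by simp
next
  case (Suc j)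
  have "u ^ i * v ^ Suc j = (u ^ i * v ^ j) * v" by (simp only: power_Suc2 mult.assoc)
  also have "\<dots> = (if j \<le> i then u ^ (i - j) else v ^ (j - i)) * v" using Suc by simp
  also have "\<dots> = (if Suc j \<le> i then u ^ (i - Suc j) else v ^ (Suc j - i))"
  proof (cases "Suc j \<le> i")
    case True
    then obtain k where k: "i - j = Suc k" by (metis Suc_diff_le Suc_le_lessD less_imp_le_nat diff_Suc_Suc)
    then have "u ^ (i - j) * v = u ^ k" by (simp only: k power_Suc2 mult.assoc uv mult_1_right)
    moreover have "i - Suc j = k" using k by arith
    ultimately show ?thesis using True by simp
  next
    case False
    then show ?thesis by (auto simp: power_Suc2 Suc_diff_le le_Suc_eq power_commutes)
  qed
  finally show ?case .
qed

lemma Upow_add: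
  fixes u v :: "'a::monoid_mult" assumes uv: "u * v = 1" and vu: "v * u = 1"
  shows "Upow u v a * Upow u v b = Upow u v (a + b)"
proof -
  consider "0 \<le> a" "0 \<le> b" | "a < 0" "b < 0" | "0 \<le> a" "b < 0" | "a < 0" "0 \<le> b" by linarith
  then show ?thesis
  proof cases
    case 1 then show ?thesis by (simp add: Upow_def power_add[symmetric] nat_add_distrib)
  next
    case 2 then show ?thesis by (simp add: Upow_def power_add[symmetric] nat_add_distrib[symmetric])
  next
    case 3
    have e1: "nat (-b) \<le> nat a \<Longrightarrow> nat a - nat (-b) = nat (a+b)" using 3 by arith
    have e2: "\<not> nat (-b) \<le> nat a \<Longrightarrow> nat (-b) - nat a = nat (-(a+b))" using 3 by arith
    have "u ^ nat a * v ^ nat (-b) = Upow u v (a + b)"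
      using 3 e1 e2 by (simp add: uv_pow[OF uv] Upow_def)
    then show ?thesis using 3 by (simp add: Upow_def)
  next
    case 4
    have e1: "nat b \<le> nat (-a) \<Longrightarrow> nat (-a) - nat b = nat (-(a+b))" using 4 by arith
    have e2: "\<not> nat b \<le> nat (-a) \<Longrightarrow> nat b - nat (-a) = nat (a+b)" using 4 by arith
    have "v ^ nat (-a) * u ^ nat b = Upow u v (a + b)"
      using 4 e1 e2 by (simp add: uv_pow[OF vu] Upow_def)
    then show ?thesis using 4 by (simp add: Upow_def)
  qed
qed

lemma Upow_0[simp]: "Upow u v 0 = 1" by (simp add: Upow_def)
lemma Upow_1[simp]: "Upow u v 1 = u" by (simp add: Upow_def)
lemma Upow_m1[simp]: "Upow u v (-1) = v" by (simp add: Upow_def)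

locale gwa =
  fixes \<iota> :: "'k::field \<Rightarrow> 'd::ring_1" and \<sigma> :: "'d \<Rightarrow> 'd" and a :: 'd
    and \<phi> :: "'d \<Rightarrow> 'a::ring_1" and x y :: 'a
  assumes emb: "k_algebra_emb \<iota>" and aut: "k_algebra_aut \<iota> \<sigma>" and GW: "is_GWA \<sigma> a \<phi> x y"
begin

abbreviation "\<sigma>' \<equiv> inv \<sigma>"

lemma i1: "\<iota> 1 = 1" and iadd: "\<iota> (c + e) = \<iota> c + \<iota> e" and imul: "\<iota> (c * e) = \<iota> c * \<iota> e"
  and icen: "\<iota> c * d = d * \<iota> c"
  using emb unfolding k_algebra_emb_def by blast+

lemma sbij: "bij \<sigma>" and s1: "\<sigma> 1 = 1" and sadd: "\<sigma> (d + e) = \<sigma> d + \<sigma> e"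
  and smul: "\<sigma> (d * e) = \<sigma> d * \<sigma> e" and si: "\<sigma> (\<iota> c) = \<iota> c"
  using aut unfolding k_algebra_aut_def by auto

lemma ss': "\<sigma> (\<sigma>' d) = d" using sbij by (simp add: bij_def surj_f_inv_f)
lemma s's: "\<sigma>' (\<sigma> d) = d" using sbij by (simp add: bij_def inv_f_f)

lemma p1: "\<phi> 1 = 1" and padd: "\<phi> (d + e) = \<phi> d + \<phi> e" and pmul: "\<phi> (d * e) = \<phi> d * \<phi> e"
  using GW unfolding is_GWA_def unital_ring_hom_def by auto

lemma xp: "x * \<phi> d = \<phi> (\<sigma> d) * x" and yp: "y * \<phi> d = \<phi> (\<sigma>' d) * y"
  and yx: "y * x = \<phi> a" and xy: "x * y = \<phi> (\<sigma> a)"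
  using GW unfolding is_GWA_def by auto

definition rep :: "(nat \<Rightarrow> 'd) \<Rightarrow> (nat \<Rightarrow> 'd) \<Rightarrow> 'a" where
  "rep c e = (\<Sum>n\<in>{n. c n \<noteq> 0}. \<phi> (c n) * x ^ n) + (\<Sum>n\<in>{n. e n \<noteq> 0}. \<phi> (e n) * y ^ Suc n)"

lemma nf_ex: "\<exists>c e. finite {n. c n \<noteq> 0} \<and> finite {n. e n \<noteq> 0} \<and> b = rep c e"
proof -
  from GW have "\<exists>!(c, e). finite {n. c n \<noteq> 0} \<and> finite {n. e n \<noteq> 0} \<and> b = rep c e"
    unfolding is_GWA_def rep_def by blast
  then obtain p where "case p of (c, e) \<Rightarrow> finite {n. c n \<noteq> 0} \<and> finite {n. e n \<noteq> 0} \<and> b = rep c e"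
    by blast
  then show ?thesis by (cases p) blast
qed

lemma nf_unique:
  assumes "finite {n. c n \<noteq> 0}" "finite {n. e n \<noteq> 0}" "finite {n. c' n \<noteq> 0}" "finite {n. e' n \<noteq> 0}"
    and "rep c e = rep c' e'"
  shows "c = c' \<and> e = e'"
proof -
  let ?P = "\<lambda>(c, e). finite {n. c n \<noteq> 0} \<and> finite {n. e n \<noteq> 0} \<and> rep c' e' = rep c e"
  from GW have ex1: "\<exists>!p. ?P p"
    unfolding is_GWA_def rep_def by blast
  have "?P (c, e)" "?P (c', e')" using assms by auto
  then have "(c, e) = (c', e')" using ex1 unfolding Ex1_def by blast
  then show ?thesis by simp
qed

lemma p0: "\<phi> 0 = 0" using padd[of 0 0] by simp
lemma pminus: "\<phi> (d - e) = \<phi> d - \<phi> e" using padd[of "d - e" e] by (simp add: algebra_simps)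
lemma psum: "\<phi> (sum f S) = (\<Sum>i\<in>S. \<phi> (f i))"
  by (induction S rule: infinite_finite_induct) (auto simp: p0 padd)

lemma nf0: assumes "finite J" "(\<Sum>j\<in>J. \<phi> (d j) * x ^ j) = 0" "j \<in> J" shows "d j = 0"
proof -
  define c where "c = (\<lambda>j. if j \<in> J then d j else 0)"
  have fc: "finite {n. c n \<noteq> 0}" using assms(1) by (rule rev_finite_subset) (auto simp: c_def)
  have "(\<Sum>n\<in>{n. c n \<noteq> 0}. \<phi> (c n) * x ^ n) = (\<Sum>n\<in>J. \<phi> (c n) * x ^ n)"
    using assms(1) by (intro sum.mono_neutral_left) (auto simp: c_def p0)
  also have "\<dots> = 0" using assms(2) by (simp add: c_def)
  finally have "rep c (\<lambda>_. 0) = rep (\<lambda>_. 0) (\<lambda>_. 0)" by (simp add: rep_def)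
  then have "c = (\<lambda>_. 0)" using nf_unique[OF fc, of "\<lambda>_. 0" "\<lambda>_. 0" "\<lambda>_. 0"] by simp
  then have "c j = 0" by simp
  then show ?thesis using assms(3) by (simp add: c_def)
qed

lemma xpow: "x ^ n * \<phi> d = \<phi> ((\<sigma> ^^ n) d) * x ^ n"
proof (induction n)
  case 0 then show ?case by simp
next
  case (Suc n)
  have "x ^ Suc n * \<phi> d = x * (x ^ n * \<phi> d)" by (simp add: mult.assoc)
  also have "\<dots> = (x * \<phi> ((\<sigma> ^^ n) d)) * x ^ n" by (simp add: Suc mult.assoc)
  also have "\<dots> = \<phi> ((\<sigma> ^^ Suc n) d) * x ^ Suc n" by (simp add: xp mult.assoc)
  finally show ?case .
qed

lemma ypow: "y ^ n * \<phi> d = \<phi> ((\<sigma>' ^^ n) d) * y ^ n"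
proof (induction n)
  case 0 then show ?case by simp
next
  case (Suc n)
  have "y ^ Suc n * \<phi> d = y * (y ^ n * \<phi> d)" by (simp add: mult.assoc)
  also have "\<dots> = (y * \<phi> ((\<sigma>' ^^ n) d)) * y ^ n" by (simp add: Suc mult.assoc)
  also have "\<dots> = \<phi> ((\<sigma>' ^^ Suc n) d) * y ^ Suc n" by (simp add: yp mult.assoc)
  finally show ?case .
qed

lemma s'i: "\<sigma>' (\<iota> c) = \<iota> c" using s's[of "\<iota> c"] si by simp
lemma sni: "(\<sigma> ^^ n) (\<iota> c) = \<iota> c" by (induction n) (simp_all add: si)
lemma s'ni: "(\<sigma>' ^^ n) (\<iota> c) = \<iota> c" by (induction n) (simp_all add: s'i)

lemma A_central: "\<phi> (\<iota> c) * b = b * \<phi> (\<iota> c)"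
proof -
  obtain cc e where b: "b = rep cc e" using nf_ex by blast
  have "\<phi> (\<iota> c) * (\<phi> d * x ^ n) = (\<phi> d * x ^ n) * \<phi> (\<iota> c)" for d n
  proof -
    have "(\<phi> d * x ^ n) * \<phi> (\<iota> c) = \<phi> d * \<phi> (\<iota> c) * x ^ n" by (simp only: mult.assoc xpow sni)
    also have "\<dots> = \<phi> (\<iota> c) * (\<phi> d * x ^ n)" by (simp only: mult.assoc[symmetric] pmul[symmetric] icen)
    finally show ?thesis by simp
  qed
  moreover have "\<phi> (\<iota> c) * (\<phi> d * y ^ n) = (\<phi> d * y ^ n) * \<phi> (\<iota> c)" for d n
  proof -
    have "(\<phi> d * y ^ n) * \<phi> (\<iota> c) = \<phi> d * \<phi> (\<iota> c) * y ^ n" by (simp only: mult.assoc ypow s'ni)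
    also have "\<dots> = \<phi> (\<iota> c) * (\<phi> d * y ^ n)" by (simp only: mult.assoc[symmetric] pmul[symmetric] icen)
    finally show ?thesis by simp
  qed
  ultimately show ?thesis unfolding b rep_def
    by (simp only: distrib_left distrib_right sum_distrib_left sum_distrib_right)
qed

sublocale D: kalg \<iota> by unfold_locales (simp_all add: i1 iadd imul, rule icen)
sublocale A: kalg "\<lambda>c. \<phi> (\<iota> c)" by unfold_locales (simp_all add: i1 iadd imul p1 padd pmul, rule A_central)

end

lemma setpow_image: "(\<lambda>d. f d) ` setpow Y n \<subseteq> setpow (f ` Y) n"
  if "f 1 = 1" "\<And>d e. f (d * e) = f d * f e" for f :: "'d::monoid_mult \<Rightarrow> 'a::monoid_mult"
  by (induction n) (auto simp: that setmul_def, fastforce)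

lemma setpow_single: "setpow {z} n = {z ^ n}"
  by (induction n) (auto simp: setmul_def power_Suc2 power_commutes)

context gwa begin

lemma lower_dim:
  assumes fB: "finite B"
  shows "(n + 1) * D.dim (D.span (setpow (insert 1 B) n))
       \<le> A.dim (A.span (setpow (insert 1 (insert x (\<phi> ` B))) (2 * n)))"
proof -
  define S where "S = setpow (insert 1 B) n"
  define C where "C = insert 1 (insert x (\<phi> ` B))"
  have fS: "finite S" unfolding S_def using fB by (simp add: finite_setpow)
  obtain \<beta> where b: "\<beta> \<subseteq> D.span S" "D.independent \<beta>" "D.span S \<subseteq> D.span \<beta>"
      "card \<beta> = D.dim (D.span S)"
    using D.basis_exists by blast
  have fb: "finite \<beta>" using D.independent_span_bound[OF fS b(2) b(1)] by simp
  have b0: "0 \<notin> \<beta>" using b(2) D.dependent_zero by blast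
  define F where "F = (\<lambda>(e, j). \<phi> e * x ^ j)"
  define Q where "Q = F ` (\<beta> \<times> {0..n})"
  have pneg: "\<phi> (- e) = - \<phi> e" for e using pminus[of 0 e] by (simp add: p0)
  have injF: "inj_on F (\<beta> \<times> {0..n})"
  proof (rule inj_onI, clarify)
    fix e j e' j' assume e: "e \<in> \<beta>" "e' \<in> \<beta>" and eq: "F (e, j) = F (e', j')"
    show "e = e' \<and> j = j'"
    proof (cases "j = j'")
      case True
      have "(\<Sum>i\<in>{j}. \<phi> (e - e') * x ^ i) = 0" using eq True by (simp add: F_def pminus algebra_simps)
      then have "e - e' = 0" using nf0[of "{j}" "\<lambda>_. e - e'" j] by simp
      then show ?thesis using True by simp
    next
      case False
      have "(\<Sum>i\<in>{j, j'}. \<phi> (if i = j then e else - e') * x ^ i) = 0"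
        using eq False by (simp add: F_def pneg)
      then have "(if j = j then e else - e') = 0" using nf0[of "{j, j'}" "\<lambda>i. if i = j then e else - e'" j] by simp
      then show ?thesis using e b0 by simp
    qed
  qed
  have cardQ: "card Q = (n + 1) * card \<beta>"
    unfolding Q_def using card_image[OF injF] by (simp add: card_cartesian_product)
  have QA: "Q \<subseteq> A.span (setpow C (2 * n))"
  proof
    fix q assume "q \<in> Q"
    then obtain e j where q: "q = \<phi> e * x ^ j" "e \<in> \<beta>" "j \<le> n" by (auto simp: Q_def F_def)
    have "\<phi> e \<in> A.span (\<phi> ` S)"
      using D.linear_span_into[of \<phi> "\<lambda>c. \<phi> (\<iota> c)" e S] q(2) b(1) A.kalg_axioms padd pmul by blast
    moreover have "\<phi> ` S \<subseteq> setpow C n"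
    proof -
      have "\<phi> ` S \<subseteq> setpow (\<phi> ` insert 1 B) n" unfolding S_def by (rule setpow_image) (auto simp: p1 pmul)
      also have "\<dots> \<subseteq> setpow C n" by (rule setpow_mono_set) (auto simp: C_def p1)
      finally show ?thesis .
    qed
    ultimately have pe: "\<phi> e \<in> A.span (setpow C n)" using A.span_mono by blast
    have "x ^ j \<in> setpow C n"
    proof -
      have "x ^ j \<in> setpow C j" using setpow_mono_set[of "{x}" C j] by (auto simp: setpow_single C_def)
      then show ?thesis using setpow_mono[of C j n] q(3) by (auto simp: C_def)
    qed
    then have "q \<in> A.span (setmul (setpow C n) (setpow C n))"
      using A.span_mul[OF pe A.span_base] q(1) by blast
    then show "q \<in> A.span (setpow C (2 * n))" by (simp add: setpow_add[symmetric] mult_2)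
  qed
  have indep: "A.independent Q"
  proof (rule A.independent_if_scalars_zero)
    show "finite Q" unfolding Q_def using fb by simp
  next
    fix f q assume sum0: "(\<Sum>q\<in>Q. \<phi> (\<iota> (f q)) * q) = 0" and qQ: "q \<in> Q"
    define g where "g = (\<lambda>j e. f (F (e, j)))"
    have "(\<Sum>q\<in>Q. \<phi> (\<iota> (f q)) * q) = (\<Sum>p\<in>\<beta> \<times> {0..n}. \<phi> (\<iota> (f (F p))) * F p)"
      unfolding Q_def by (rule sum.reindex[OF injF, unfolded comp_def])
    also have "\<dots> = (\<Sum>e\<in>\<beta>. \<Sum>j\<in>{0..n}. \<phi> (\<iota> (g j e)) * (\<phi> e * x ^ j))"
      by (simp add: sum.cartesian_product g_def F_def split_def)
    also have "\<dots> = (\<Sum>j\<in>{0..n}. \<Sum>e\<in>\<beta>. \<phi> (\<iota> (g j e)) * (\<phi> e * x ^ j))"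
      by (rule sum.swap)
    also have "\<dots> = (\<Sum>j\<in>{0..n}. \<phi> (\<Sum>e\<in>\<beta>. \<iota> (g j e) * e) * x ^ j)"
      by (simp add: psum pmul sum_distrib_right mult.assoc)
    finally have "(\<Sum>j\<in>{0..n}. \<phi> (\<Sum>e\<in>\<beta>. \<iota> (g j e) * e) * x ^ j) = 0" using sum0 by simp
    then have z: "(\<Sum>e\<in>\<beta>. \<iota> (g j e) * e) = 0" if "j \<in> {0..n}" for j
      using nf0[of "{0..n}" "\<lambda>j. \<Sum>e\<in>\<beta>. \<iota> (g j e) * e" j] that by simp
    from qQ obtain e j where ej: "q = F (e, j)" "e \<in> \<beta>" "j \<in> {0..n}" by (auto simp: Q_def)
    have "g j e = 0"
      using b(2) z[OF ej(3)] ej(2) fb unfolding D.independent_explicit_finite_subsets by blast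
    then show "f q = 0" by (simp add: g_def ej(1))
  qed
  have "card Q \<le> A.dim (A.span (setpow C (2 * n)))"
    by (rule A.card_le_dim[OF finite_setpow indep QA]) (simp add: C_def fB)
  then show ?thesis using cardQ b(4) unfolding S_def C_def by simp
qed

end

locale gwa_inner = gwa \<iota> \<sigma> a \<phi> x y
  for \<iota> :: "'k::field \<Rightarrow> 'd::ring_1" and \<sigma> :: "'d \<Rightarrow> 'd" and a :: 'd
    and \<phi> :: "'d \<Rightarrow> 'a::ring_1" and x y :: 'a +
  fixes m :: nat and u v :: 'd
  assumes m1: "m \<ge> 1" and uv: "u * v = 1" and vu: "v * u = 1" and conj: "\<And>d. (\<sigma> ^^ m) d = u * d * v"
begin

definition sig :: "int \<Rightarrow> 'd \<Rightarrow> 'd" where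
  "sig l d = (if 0 \<le> l then (\<sigma> ^^ nat l) d else (\<sigma>' ^^ nat (- l)) d)"

definition z :: "int \<Rightarrow> 'a" where
  "z l = (if 0 \<le> l then x ^ nat l else y ^ nat (- l))"

abbreviation U :: "int \<Rightarrow> 'd" where "U \<equiv> Upow u v"

lemma sig_succ: "sig (l + 1) d = \<sigma> (sig l d)"
proof -
  consider "0 \<le> l" | "l = -1" | "l < -1" by linarith
  then show ?thesis
  proof cases
    case 1
    then have "nat (l + 1) = Suc (nat l)" by simp
    then show ?thesis using 1 by (simp add: sig_def)
  next
    case 2 then show ?thesis by (simp add: sig_def ss')
  next
    case 3
    then have "nat (- l) = Suc (nat (- (l + 1)))" by simp
    then show ?thesis using 3 by (simp add: sig_def ss')
  qed
qed

lemma sig_plus_nat: "sig (l + int n) d = (\<sigma> ^^ n) (sig l d)"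
proof (induction n)
  case 0 then show ?case by simp
next
  case (Suc n)
  have "sig (l + int (Suc n)) d = sig ((l + int n) + 1) d" by (simp add: ac_simps)
  also have "\<dots> = \<sigma> (sig (l + int n) d)" by (rule sig_succ)
  finally show ?case using Suc by simp
qed

lemma sig_plus_m: "sig (l + int m) d = u * sig l d * v"
  using sig_plus_nat[of l m d] conj by simp

lemma sig_minus_m: "sig (l - int m) d = v * sig l d * u"
proof -
  have "sig l d = u * sig (l - int m) d * v" using sig_plus_m[of "l - int m" d] by simp
  then have "v * sig l d * u = (v * u) * sig (l - int m) d * (v * u)" by (simp add: mult.assoc)
  then show ?thesis using vu by simp
qed

lemma sig_q: "sig (q * int m + r) d = U q * sig r d * U (- q)"
proof (induction q rule: int_induct[where k = 0])
  case base then show ?case by simp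
next
  case (step1 i)
  have "sig ((i + 1) * int m + r) d = sig ((i * int m + r) + int m) d" by (simp add: algebra_simps)
  also have "\<dots> = u * (U i * sig r d * U (- i)) * v" using step1 sig_plus_m by simp
  also have "\<dots> = (U 1 * U i) * sig r d * (U (- i) * U (- 1))" by (simp add: mult.assoc)
  also have "\<dots> = U (i + 1) * sig r d * U (- (i + 1))" by (simp only: Upow_add[OF uv vu]) (simp add: algebra_simps)
  finally show ?case .
next
  case (step2 i)
  have "sig ((i - 1) * int m + r) d = sig ((i * int m + r) - int m) d" by (simp add: algebra_simps)
  also have "\<dots> = v * (U i * sig r d * U (- i)) * u" using step2 sig_minus_m by simp
  also have "\<dots> = (U (-1) * U i) * sig r d * (U (- i) * U 1)" by (simp add: mult.assoc)
  also have "\<dots> = U (i - 1) * sig r d * U (- (i - 1))" by (simp only: Upow_add[OF uv vu]) (simp add: algebra_simps)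
  finally show ?case .
qed

abbreviation qd :: "int \<Rightarrow> int" where "qd l \<equiv> l div int m"

lemma sig_decomp: "sig l d = U (qd l) * (\<sigma> ^^ nat (l mod int m)) d * U (- qd l)"
proof -
  have "sig l d = sig (qd l * int m + l mod int m) d" by simp
  also have "\<dots> = U (qd l) * sig (l mod int m) d * U (- qd l)" by (rule sig_q)
  finally show ?thesis using m1 by (simp add: sig_def)
qed

lemma z_phi: "z l * \<phi> d = \<phi> (sig l d) * z l"
  by (simp add: z_def sig_def xpow ypow)

lemma z_x: "z l * x = \<phi> (if 0 \<le> l then 1 else sig (l + 1) a) * z (l + 1)"
proof (cases "0 \<le> l")
  case True
  then have "nat (l + 1) = Suc (nat l)" by simp
  then show ?thesis using True by (simp add: z_def p1 power_Suc2 power_commutes)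
next
  case False
  define j where "j = nat (- (l + 1))"
  have k: "nat (- l) = Suc j" using False by (simp add: j_def)
  have "y ^ nat (- l) = y ^ j * y" by (metis k power_Suc2)
  then have "z l * x = y ^ j * (y * x)" using False by (simp add: z_def mult.assoc)
  also have "\<dots> = \<phi> ((\<sigma>' ^^ j) a) * y ^ j" by (simp add: yx ypow)
  also have "\<dots> = \<phi> (sig (l + 1) a) * z (l + 1)"
    using False by (cases "l + 1 = 0") (simp_all add: sig_def z_def j_def)
  finally show ?thesis using False by simp
qed

lemma z_y: "z l * y = \<phi> (if l \<le> 0 then 1 else sig l a) * z (l - 1)"
proof (cases "l \<le> 0")
  case True
  then have "nat (- (l - 1)) = Suc (nat (- l))" by simp
  then show ?thesis using True by (cases "l = 0") (simp_all add: z_def p1 power_Suc2 power_commutes)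
next
  case False
  define j where "j = nat (l - 1)"
  have k: "nat l = Suc j" using False by (simp add: j_def)
  have "x ^ nat l = x ^ j * x" by (metis k power_Suc2)
  then have "z l * y = x ^ j * (x * y)" using False by (simp add: z_def mult.assoc)
  also have "\<dots> = \<phi> ((\<sigma> ^^ j) (\<sigma> a)) * x ^ j" by (simp add: xy xpow)
  also have "\<dots> = \<phi> (sig l a) * z (l - 1)"
    using False k by (simp add: sig_def z_def j_def funpow_swap1)
  finally show ?thesis using False by simp
qed

lemma qd_mono_step: assumes "l \<le> l'" "l' \<le> l + 1" shows "qd l \<le> qd l'" "qd l' \<le> qd l + 1"
proof -
  show "qd l \<le> qd l'" using assms m1 by (intro zdiv_mono1) auto
  have "qd l' \<le> (l + int m) div int m" using assms m1 by (intro zdiv_mono1) auto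
  also have "\<dots> = qd l + 1" using m1 by simp
  finally show "qd l' \<le> qd l + 1" .
qed

lemma qd_close: assumes "\<bar>l - l'\<bar> \<le> 1" shows "\<bar>qd l - qd l'\<bar> \<le> 1"
proof (cases "l \<le> l'")
  case True then show ?thesis using qd_mono_step[of l l'] assms by auto
next
  case False then show ?thesis using qd_mono_step[of l' l] assms by auto
qed

lemma qd_abs: "\<bar>qd l\<bar> \<le> \<bar>l\<bar>"
proof (cases "0 \<le> l")
  case True
  have "qd l \<le> l div 1" using True m1 by (intro zdiv_mono2) auto
  then show ?thesis using True m1 by (simp add: pos_imp_zdiv_nonneg_iff)
next
  case False
  have "l * int m \<le> l" using False m1 by (simp add: mult_le_cancel_left1)
  then have "(l * int m) div int m \<le> qd l" using m1 by (intro zdiv_mono1) auto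
  then have "l \<le> qd l" using m1 by simp
  moreover have "qd l \<le> 0" using False m1 by (simp add: div_nonpos_pos_le0)
  ultimately show ?thesis by simp
qed

definition Yset :: "'d set \<Rightarrow> 'd set" where
  "Yset E = {1, u, v} \<union> (\<lambda>(r, e). (\<sigma> ^^ r) e) ` ({..<m} \<times> insert a E)"

definition Z0 :: "'d set \<Rightarrow> 'a set" where
  "Z0 E = insert x (insert y (\<phi> ` E))"

lemma finite_Yset: "finite E \<Longrightarrow> finite (Yset E)" by (simp add: Yset_def)
lemma one_Y: "1 \<in> Yset E" by (simp add: Yset_def)

lemma U_in_Y: "\<bar>j\<bar> \<le> 1 \<Longrightarrow> U j \<in> Yset E"
  by (cases "j = 0"; cases "j = 1"; cases "j = -1") (auto simp: Yset_def)

lemma sigr_in_Y: "e \<in> insert a E \<Longrightarrow> (\<sigma> ^^ nat (l mod int m)) e \<in> Yset E"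
proof -
  assume e: "e \<in> insert a E"
  have "nat (l mod int m) < m" using m1 by (simp add: nat_less_iff)
  then show ?thesis using e unfolding Yset_def by force
qed


lemma setpow_Suc_mem: "p \<in> setpow Y n \<Longrightarrow> w \<in> Y \<Longrightarrow> p * w \<in> setpow Y (Suc n)"
  by (auto simp: setmul_def)

lemma pow_in_setpow: "w \<in> Y \<Longrightarrow> w ^ k \<in> setpow Y k"
proof (induction k)
  case 0 then show ?case by simp
next
  case (Suc k) then show ?case by (metis power_Suc2 setpow_Suc_mem)
qed

lemma U_setpow: "U j \<in> setpow (Yset E) (nat \<bar>j\<bar>)"
  by (cases "0 \<le> j") (auto simp: Upow_def Yset_def intro!: pow_in_setpow)

lemma step_K:
  assumes d: "d \<in> setpow (Yset E) j" and ll': "\<bar>l' - l\<bar> \<le> 1"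
    and w0: "w0 = 1 \<or> (\<exists>l''. w0 = sig l'' a \<and> \<bar>l'' - l\<bar> \<le> 1 \<and> \<bar>l'' - l'\<bar> \<le> 1)"
  shows "\<exists>d''\<in>setpow (Yset E) (j + 3). d * U (- qd l) * w0 = d'' * U (- qd l')"
proof -
  note UA = Upow_add[OF uv vu]
  from w0 show ?thesis
  proof
    assume w1: "w0 = 1"
    define d'' where "d'' = d * U (qd l' - qd l) * 1 * 1"
    have "d'' \<in> setpow (Yset E) (j + 3)" unfolding d''_def numeral_3_eq_3
      using d U_in_Y[OF qd_close[of l' l]] ll' one_Y
      by (simp only: add_Suc_right add_0_right) (intro setpow_Suc_mem; simp)
    moreover have "d * U (- qd l) * w0 = d'' * U (- qd l')"
      unfolding d''_def w1 by (simp add: mult.assoc UA)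
    ultimately show ?thesis by blast
  next
    assume "\<exists>l''. w0 = sig l'' a \<and> \<bar>l'' - l\<bar> \<le> 1 \<and> \<bar>l'' - l'\<bar> \<le> 1"
    then obtain l'' where l'': "w0 = sig l'' a" "\<bar>l'' - l\<bar> \<le> 1" "\<bar>l'' - l'\<bar> \<le> 1" by blast
    define s where "s = (\<sigma> ^^ nat (l'' mod int m)) a"
    define d'' where "d'' = d * U (qd l'' - qd l) * s * U (qd l' - qd l'')"
    have "d'' \<in> setpow (Yset E) (j + 3)" unfolding d''_def numeral_3_eq_3
      using d U_in_Y[OF qd_close[of l'' l]] U_in_Y[OF qd_close[of l' l'']] l'' ll' sigr_in_Y[of a E l'']
      by (simp only: add_Suc_right add_0_right s_def) (intro setpow_Suc_mem; simp add: abs_minus_commute)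
    moreover have "d * U (- qd l) * w0 = d'' * U (- qd l')"
    proof -
      have "d * U (- qd l) * w0 = d * (U (- qd l) * U (qd l'')) * s * (U (- qd l''))"
        unfolding l''(1) sig_decomp[of l'' a] s_def by (simp add: mult.assoc)
      also have "\<dots> = d * U (qd l'' - qd l) * s * (U (qd l' - qd l'') * U (- qd l'))"
        by (simp add: UA)
      finally show ?thesis unfolding d''_def by (simp add: mult.assoc)
    qed
    ultimately show ?thesis by blast
  qed
qed

definition T :: "'d set \<Rightarrow> nat \<Rightarrow> 'a set" where
  "T E n = {\<phi> (d * U (- qd l)) * z l | d l. d \<in> setpow (Yset E) (3 * n) \<and> \<bar>l\<bar> \<le> int n}"

lemma setpow_Z0_T: assumes E1: "1 \<in> E" shows "setpow (Z0 E) n \<subseteq> T E n"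
proof (induction n)
  case 0
  have "\<phi> (1 * U (- qd 0)) * z 0 \<in> T E 0" unfolding T_def by force
  then show ?case by (simp add: z_def p1)
next
  case (Suc n)
  show ?case
  proof
    fix w assume "w \<in> setpow (Z0 E) (Suc n)"
    then obtain p \<zeta> where w: "w = p * \<zeta>" "p \<in> setpow (Z0 E) n" "\<zeta> \<in> Z0 E" by (auto simp: setmul_def)
    then obtain d l where p: "p = \<phi> (d * U (- qd l)) * z l" "d \<in> setpow (Yset E) (3 * n)" "\<bar>l\<bar> \<le> int n"
      using Suc unfolding T_def by blast
    have mono: "setpow (Yset E) (3 * n + k) \<subseteq> setpow (Yset E) (3 * Suc n)" if "k \<le> 3" for k
      using setpow_mono[OF one_Y, of "3 * n + k" "3 * Suc n" E] that by simp
    have xy_case: "\<phi> (d * U (- qd l)) * (\<phi> w0 * z l') \<in> T E (Suc n)"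
      if lq: "\<bar>l' - l\<bar> \<le> 1" "w0 = 1 \<or> (\<exists>l''. w0 = sig l'' a \<and> \<bar>l'' - l\<bar> \<le> 1 \<and> \<bar>l'' - l'\<bar> \<le> 1)" for w0 l'
    proof -
      obtain d'' where d'': "d'' \<in> setpow (Yset E) (3 * n + 3)" "d * U (- qd l) * w0 = d'' * U (- qd l')"
        using step_K[of d E "3 * n" l' l w0] p(2) lq by blast
      have "\<phi> (d * U (- qd l)) * (\<phi> w0 * z l') = \<phi> (d'' * U (- qd l')) * z l'"
        by (simp add: mult.assoc[symmetric] pmul[symmetric] d''(2))
      moreover have "\<bar>l'\<bar> \<le> int (Suc n)" using lq(1) p(3) by simp
      ultimately show ?thesis using mono[of 3] d''(1) unfolding T_def by blast
    qed
    from w(3) consider "\<zeta> = x" | "\<zeta> = y" | e where "e \<in> E" "\<zeta> = \<phi> e" unfolding Z0_def by blast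
    then show "w \<in> T E (Suc n)"
    proof cases
      case 1
      have "w = \<phi> (d * U (- qd l)) * (\<phi> (if 0 \<le> l then 1 else sig (l + 1) a) * z (l + 1))"
        using w(1) p(1) 1 z_x by (simp add: mult.assoc)
      then show ?thesis by (auto intro!: xy_case)
    next
      case 2
      have "w = \<phi> (d * U (- qd l)) * (\<phi> (if l \<le> 0 then 1 else sig l a) * z (l - 1))"
        using w(1) p(1) 2 z_y by (simp add: mult.assoc)
      then show ?thesis by (auto intro!: xy_case)
    next
      case 3
      define s where "s = (\<sigma> ^^ nat (l mod int m)) e"
      have "w = \<phi> (d * U (- qd l) * sig l e) * z l"
        using w(1) p(1) 3 z_phi by (simp add: mult.assoc pmul)
      also have "d * U (- qd l) * sig l e = (d * s) * U (- qd l)"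
      proof -
        have h: "U (- qd l) * U (qd l) = 1" using Upow_add[OF uv vu, of "- qd l" "qd l"] by simp
        have "d * U (- qd l) * sig l e = d * (U (- qd l) * U (qd l)) * s * U (- qd l)"
          unfolding sig_decomp[of l e] s_def by (simp only: mult.assoc)
        then show ?thesis using h by simp
      qed
      finally have "w = \<phi> ((d * s) * U (- qd l)) * z l" .
      moreover have "d * s \<in> setpow (Yset E) (3 * n + 1)"
        using setpow_Suc_mem[OF p(2) sigr_in_Y[of e E l]] 3 by (simp add: s_def)
      ultimately show ?thesis using mono[of 1] p(3) unfolding T_def by force
    qed
  qed
qed

end

lemma mem_pow_setpow: "p \<in> Z \<Longrightarrow> w \<in> Z \<Longrightarrow> p * w ^ n \<in> setpow Z (Suc n)"
proof (induction n)
  case 0 then show ?case by (simp add: setmul_def)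
next
  case (Suc n)
  have "p * w ^ Suc n = (p * w ^ n) * w" by (simp add: power_Suc2 mult.assoc power_commutes)
  then show ?case using Suc by (auto simp: setmul_def simp del: setpow.simps) (simp add: setmul_def; blast)
qed

context gwa_inner begin

lemma upper_dim:
  assumes fE: "finite E" and E1: "1 \<in> E" and V: "V \<subseteq> A.span (setpow (Z0 E) N)"
  shows "A.dim V \<le> (2 * N + 1) * D.dim (D.span (setpow (Yset E) (4 * N)))"
proof -
  define S where "S = setpow (Yset E) (4 * N)"
  have fS: "finite S" unfolding S_def by (simp add: finite_setpow finite_Yset fE)
  obtain \<beta> where b: "\<beta> \<subseteq> D.span S" "D.independent \<beta>" "D.span S \<subseteq> D.span \<beta>"
      "card \<beta> = D.dim (D.span S)"
    using D.basis_exists by blast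
  have fb: "finite \<beta>" using D.independent_span_bound[OF fS b(2) b(1)] by simp
  define L where "L = (\<lambda>l d. \<phi> d * z l)"
  define I where "I = {- int N..int N}"
  define W where "W = (\<Union>l\<in>I. L l ` \<beta>)"
  have fW: "finite W" unfolding W_def I_def using fb by simp
  have TW: "T E N \<subseteq> A.span W"
  proof
    fix w assume "w \<in> T E N"
    then obtain d l where w: "w = \<phi> (d * U (- qd l)) * z l" "d \<in> setpow (Yset E) (3 * N)" "\<bar>l\<bar> \<le> int N"
      unfolding T_def by blast
    have "d * U (- qd l) \<in> setmul (setpow (Yset E) (3 * N)) (setpow (Yset E) (nat \<bar>- qd l\<bar>))"
      using w(2) U_setpow[of "- qd l" E] unfolding setmul_def by blast
    also have "\<dots> = setpow (Yset E) (3 * N + nat \<bar>- qd l\<bar>)" by (simp add: setpow_add)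
    also have "\<dots> \<subseteq> S" unfolding S_def
      using qd_abs[of l] w(3) by (intro setpow_mono[OF one_Y]) auto
    finally have "d * U (- qd l) \<in> D.span \<beta>" using b(3) D.span_base by blast
    then have "L l (d * U (- qd l)) \<in> A.span (L l ` \<beta>)"
      by (intro D.linear_span_into[OF _ _ A.kalg_axioms])
        (auto simp: L_def padd pmul distrib_right mult.assoc)
    moreover have "A.span (L l ` \<beta>) \<subseteq> A.span W"
      using w(3) unfolding W_def I_def by (intro A.span_mono) force
    ultimately show "w \<in> A.span W" using w(1) unfolding L_def by blast
  qed
  have "A.span (setpow (Z0 E) N) \<subseteq> A.span W"
    using setpow_Z0_T[OF E1, of N] TW by (intro A.span_minimal) auto
  then have "A.dim V \<le> card W" using V fW by (intro A.dim_le_card) auto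
  also have "card W \<le> (\<Sum>l\<in>I. card (L l ` \<beta>))" unfolding W_def I_def by (rule card_UN_le) simp
  also have "\<dots> \<le> (\<Sum>l\<in>I. card \<beta>)" by (intro sum_mono card_image_le fb)
  also have "\<dots> = (2 * N + 1) * card \<beta>" unfolding I_def by (simp add: nat_add_distrib nat_mult_distrib)
  finally show ?thesis using b(4) unfolding S_def by simp
qed

end

context gwa_inner begin

lemma GK_upper: "GKdim (\<lambda>c b. \<phi> (\<iota> c) * b) \<le> GKdim (\<lambda>c d. \<iota> c * d) + 1"
proof -
  have "limsup (\<lambda>n. ereal (log (real n) (real (A.dim (A.span (setpow (insert 1 B) n))))))
        \<le> GKdim (\<lambda>c d. \<iota> c * d) + 1" if fB: "finite B" for B
  proof -
    define B' where "B' = insert 1 B"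
    have fB': "finite B'" using fB by (simp add: B'_def)
    have "\<forall>b. \<exists>ce. finite {n. fst ce n \<noteq> 0} \<and> finite {n. snd ce n \<noteq> 0} \<and> b = rep (fst ce) (snd ce)"
      using nf_ex by (metis fst_conv snd_conv)
    then obtain F where F: "\<And>b. finite {n. fst (F b) n \<noteq> 0} \<and> finite {n. snd (F b) n \<noteq> 0}
        \<and> b = rep (fst (F b)) (snd (F b))"
      by metis
    define sc where "sc b = {n. fst (F b) n \<noteq> 0}" for b
    define se where "se b = {n. snd (F b) n \<noteq> 0}" for b
    have fsc: "finite (sc b)" "finite (se b)" for b using F[of b] by (auto simp: sc_def se_def)
    define E where "E = insert 1 (\<Union>b\<in>B'. fst (F b) ` sc b \<union> snd (F b) ` se b)"
    have fE: "finite E" unfolding E_def using fB' fsc by simp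
    have E1: "1 \<in> E" unfolding E_def by simp
    define Ms where "Ms = insert 0 (\<Union>b\<in>B'. sc b \<union> se b)"
    have fMs: "finite Ms" unfolding Ms_def using fB' fsc by simp
    define M where "M = Max Ms"
    define K where "K = M + 2"
    have K1: "K \<ge> 1" by (simp add: K_def)
    have Mle: "n \<le> M" if "b \<in> B'" "n \<in> sc b \<union> se b" for b n
      unfolding M_def using that fMs by (intro Max_ge) (auto simp: Ms_def)
    have one_Z0: "1 \<in> Z0 E" using E1 p1 unfolding Z0_def by (metis image_eqI insertCI)
    have BZ: "B' \<subseteq> A.span (setpow (Z0 E) K)"
    proof
      fix b assume bB: "b \<in> B'"
      have t1: "\<phi> (fst (F b) n) * x ^ n \<in> A.span (setpow (Z0 E) K)" if "n \<in> sc b" for n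
      proof -
        have "\<phi> (fst (F b) n) \<in> Z0 E" using that bB unfolding Z0_def E_def by blast
        moreover have "x \<in> Z0 E" unfolding Z0_def by simp
        ultimately have "\<phi> (fst (F b) n) * x ^ n \<in> setpow (Z0 E) (Suc n)" by (rule mem_pow_setpow)
        moreover have "Suc n \<le> K" using Mle[OF bB, of n] that by (simp add: K_def)
        ultimately show ?thesis using setpow_mono[OF one_Z0] A.span_base by blast
      qed
      have t2: "\<phi> (snd (F b) n) * y ^ Suc n \<in> A.span (setpow (Z0 E) K)" if "n \<in> se b" for n
      proof -
        have "\<phi> (snd (F b) n) \<in> Z0 E" using that bB unfolding Z0_def E_def by blast
        moreover have "y \<in> Z0 E" unfolding Z0_def by simp
        ultimately have "\<phi> (snd (F b) n) * y ^ Suc n \<in> setpow (Z0 E) (Suc (Suc n))" by (rule mem_pow_setpow)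
        moreover have "Suc (Suc n) \<le> K" using Mle[OF bB, of n] that by (simp add: K_def)
        ultimately show ?thesis using setpow_mono[OF one_Z0] A.span_base by blast
      qed
      have "b = rep (fst (F b)) (snd (F b))" using F by blast
      then have beq: "b = (\<Sum>n\<in>sc b. \<phi> (fst (F b) n) * x ^ n) + (\<Sum>n\<in>se b. \<phi> (snd (F b) n) * y ^ Suc n)"
        by (simp add: rep_def sc_def se_def)
      have h1: "(\<Sum>n\<in>sc b. \<phi> (fst (F b) n) * x ^ n) \<in> A.span (setpow (Z0 E) K)"
        by (rule A.span_sum) (rule t1)
      have h2: "(\<Sum>n\<in>se b. \<phi> (snd (F b) n) * y ^ Suc n) \<in> A.span (setpow (Z0 E) K)"
        by (rule A.span_sum) (rule t2)
      show "b \<in> A.span (setpow (Z0 E) K)" by (subst beq) (rule A.span_add[OF h1 h2])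
    qed
    define Y where "Y = Yset E"
    have fY: "finite Y" unfolding Y_def using fE by (rule finite_Yset)
    have Y1: "insert 1 Y = Y" unfolding Y_def using one_Y by blast
    define f where "f n = D.dim (D.span (setpow (insert 1 Y) n))" for n
    define g where "g n = A.dim (A.span (setpow B' n))" for n
    have bound: "g n \<le> (3 * K) * n * f ((4 * K) * n)" if "n \<ge> 1" for n
    proof -
      have "A.span (setpow B' n) \<subseteq> A.span (setpow (Z0 E) (K * n))"
        using A.setpow_span_mult[OF BZ, of n] by (intro A.span_minimal) auto
      then have "g n \<le> (2 * (K * n) + 1) * D.dim (D.span (setpow (Yset E) (4 * (K * n))))"
        unfolding g_def by (rule upper_dim[OF fE E1])
      also have "\<dots> = (2 * (K * n) + 1) * f ((4 * K) * n)" by (simp add: f_def Y1 Y_def[symmetric] mult.assoc)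
      also have "\<dots> \<le> (3 * K * n) * f ((4 * K) * n)"
      proof (rule mult_le_mono1)
        have "1 \<le> K * n" using that K1 by simp
        then show "2 * (K * n) + 1 \<le> 3 * K * n" by simp
      qed
      finally show ?thesis by simp
    qed
    have f1: "f n \<ge> 1" for n unfolding f_def by (rule D.dim_pos[OF fY])
    have g1: "g n \<ge> 1" for n unfolding g_def B'_def by (rule A.dim_pos[OF fB])
    have "limsup (\<lambda>n. ereal (log (real n) (real (g n)))) \<le> limsup (\<lambda>n. ereal (log (real n) (real (f n)))) + 1"
      by (rule limsup_upper[of "4 * K" f g "3 * K"]) (use K1 f1 g1 bound in auto)
    also have "limsup (\<lambda>n. ereal (log (real n) (real (f n)))) \<le> GKdim (\<lambda>c d. \<iota> c * d)"
      unfolding D.GKdim_alt f_def using fY by (intro SUP_upper) auto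
    finally show ?thesis unfolding g_def B'_def by (simp add: add_right_mono)
  qed
  then show ?thesis unfolding A.GKdim_alt by (intro SUP_least) auto
qed

end

context gwa begin

lemma GK_lower: "GKdim (\<lambda>c d. \<iota> c * d) + 1 \<le> GKdim (\<lambda>c b. \<phi> (\<iota> c) * b)"
proof -
  have "limsup (\<lambda>n. ereal (log (real n) (real (D.dim (D.span (setpow (insert 1 B) n)))))) + 1
        \<le> GKdim (\<lambda>c b. \<phi> (\<iota> c) * b)" if fB: "finite B" for B
  proof -
    define C where "C = insert x (\<phi> ` B)"
    have fC: "finite C" using fB by (simp add: C_def)
    define f where "f n = D.dim (D.span (setpow (insert 1 B) n))" for n
    define g where "g n = A.dim (A.span (setpow (insert 1 C) n))" for n
    have "limsup (\<lambda>n. ereal (log (real n) (real (f n)))) + 1 \<le> limsup (\<lambda>n. ereal (log (real n) (real (g n))))"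
    proof (rule limsup_lower)
      show "f n \<ge> 1" for n unfolding f_def by (rule D.dim_pos[OF fB])
      show "g n \<ge> 1" for n unfolding g_def by (rule A.dim_pos[OF fC])
      show "(n + 1) * f n \<le> g (2 * n)" for n unfolding f_def g_def C_def by (rule lower_dim[OF fB])
    qed
    also have "\<dots> \<le> GKdim (\<lambda>c b. \<phi> (\<iota> c) * b)"
      unfolding A.GKdim_alt g_def using fC by (intro SUP_upper) auto
    finally show ?thesis unfolding f_def .
  qed
  then have "(SUP B\<in>{B. finite B}. limsup (\<lambda>n. ereal (log (real n) (real (D.dim (D.span (setpow (insert 1 B) n)))))) + 1)
     \<le> GKdim (\<lambda>c b. \<phi> (\<iota> c) * b)" by (intro SUP_least) auto
  moreover have "(SUP B\<in>{B. finite B}. limsup (\<lambda>n. ereal (log (real n) (real (D.dim (D.span (setpow (insert 1 B) n)))))) + 1)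
     = GKdim (\<lambda>c d. \<iota> c * d) + 1"
    unfolding D.GKdim_alt by (rule SUP_ereal_add_left) auto
  ultimately show ?thesis by simp
qed

end

lemma main_eq:
  fixes \<iota> :: "'k::field \<Rightarrow> 'd::ring_1"
    and \<sigma> :: "'d \<Rightarrow> 'd" and a :: 'd
    and \<phi> :: "'d \<Rightarrow> 'a::ring_1" and x y :: 'a
  assumes "k_algebra_emb \<iota>" and "k_algebra_aut \<iota> \<sigma>" and "is_GWA \<sigma> a \<phi> x y"
    and "m \<ge> 1" "u * v = 1" "v * u = 1" "\<forall>d. (\<sigma> ^^ m) d = u * d * v"
  shows "GKdim (\<lambda>c b. \<phi> (\<iota> c) * b) = GKdim (\<lambda>c d. \<iota> c * d) + 1"
proof -
  interpret gwa_inner \<iota> \<sigma> a \<phi> x y m u v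
    using assms by unfold_locales auto
  show ?thesis using GK_upper GK_lower by (rule antisym)
qed

theorem proposition3p2:
  fixes \<iota> :: "'k::field \<Rightarrow> 'd::ring_1"
    and \<sigma> :: "'d \<Rightarrow> 'd" and a :: 'd
    and \<phi> :: "'d \<Rightarrow> 'a::ring_1" and x y :: 'a
  assumes "k_algebra_emb \<iota>"
    and "k_algebra_aut \<iota> \<sigma>"
    and "\<forall>d. a * d = d * a"
    and "is_GWA \<sigma> a \<phi> x y"
  shows "((\<exists>m\<ge>1. \<exists>u v. u * v = 1 \<and> v * u = 1 \<and> (\<forall>d. (\<sigma> ^^ m) d = u * d * v))
            \<longrightarrow> GKdim (\<lambda>c b. \<phi> (\<iota> c) * b) = GKdim (\<lambda>c d. \<iota> c * d) + 1)
       \<and> ((\<exists>m\<ge>1. \<sigma> ^^ m = id)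
            \<longrightarrow> GKdim (\<lambda>c b. \<phi> (\<iota> c) * b) = GKdim (\<lambda>c d. \<iota> c * d) + 1)"
proof (intro conjI impI)
  assume "\<exists>m\<ge>1. \<exists>u v. u * v = 1 \<and> v * u = 1 \<and> (\<forall>d. (\<sigma> ^^ m) d = u * d * v)"
  then obtain m u v where "m \<ge> 1" "u * v = 1" "v * u = 1" "\<forall>d. (\<sigma> ^^ m) d = u * d * v" by blast
  then show "GKdim (\<lambda>c b. \<phi> (\<iota> c) * b) = GKdim (\<lambda>c d. \<iota> c * d) + 1"
    using main_eq[OF assms(1,2,4)] by blast
next
  assume "\<exists>m\<ge>1. \<sigma> ^^ m = id"
  then obtain m where "m \<ge> 1" "\<sigma> ^^ m = id" by blast
  then have "\<forall>d. (\<sigma> ^^ m) d = (1::'d) * d * 1" by simp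
  then show "GKdim (\<lambda>c b. \<phi> (\<iota> c) * b) = GKdim (\<lambda>c d. \<iota> c * d) + 1"
    using main_eq[OF assms(1,2,4) \<open>m \<ge> 1\<close>, of 1 1] by simp
qed

end
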